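(* The following bilinear equations hold for all $k,N\in\mathbb{Z}$: \begin{align*} &\tau^{k+1}_{N+1}\tau^{k+2}_{N-1} -Q^{(k-4N+2)/2}\gamma^{-2}\alpha_0\tau^{k+3}_{N}\tau^{k}_{N} -Q^{-k+4N-2}\gamma^{4}{\alpha_0}^{-2}\tau^{k+1}_{N}\tau^{k+2}_{N}=0,\\ &\tau^{k+2}_{N+1}\tau^{k+1}_{N-1} -Q^{(k+4N+2)/2}\gamma^{2}\alpha_0\tau^{k+3}_{N}\tau^{k}_{N} -Q^{-k-4N-2}\gamma^{-4}{\alpha_0}^{-2}\tau^{k+2}_{N}\tau^{k+1}_{N}=0,\\ &Q^{-(3k-4N+4)/2}\gamma^{2}{\alpha_0}^{-3}\tau^{k+3}_{N}\tau^{k}_{N+1} -Q^{-3k+4N-4}\gamma^{4}{\alpha_0}^{-6}\tau^{k+1}_{N}\tau^{k+2}_{N+1} -\tau^{k+1}_{N+1}\tau^{k+2}_{N}=0,\\ &Q^{-(3k+4N+8)/2}\gamma^{-2}{\alpha_0}^{-3}\tau^{k+3}_{N+1}\tau^{k}_{N} -Q^{-3k-4N-8}\gamma^{-4}{\alpha_0}^{-6}\tau^{k+2}_{N}\tau^{k+1}_{N+1} -\tau^{k+2}_{N+1}\tau^{k+1}_{N}=0. \end{align*}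
   Context: Let $q,c,a_0,a_1,a_2\in\mathbb{C}^\times$ with $a_0a_1a_2=q$, and let $\tau_i,\overline{\tau}_i$ ($i\in\mathbb{Z}/3\mathbb{Z}$) be variables (the $\tau$ functions of the $q$-Painlevé III system). The extended affine Weyl group $\widetilde{W}((A_2+A_1)^{(1)})=\langle s_0,s_1,s_2,\pi,w_0,w_1,r\rangle$ acts on them (elements act on functions from the right, $w.F(a_i,\tau_j)=F(a_i.w,\tau_j.w)$) by: $s_i(a_i)=a_i^{-1}$, $s_i(a_{i\pm1})=a_{i\pm1}a_i$, $\pi(a_i)=a_{i+1}$, $w_0,w_1,r$ fix all $a_i$; $s_i(\tau_i)=\dfrac{u_i\tau_{i+1}\overline{\tau}_{i-1}+\overline{\tau}_{i+1}\tau_{i-1}}{u_i^{1/2}\overline{\tau}_i}$, $s_i(\overline{\tau}_i)=\dfrac{v_i\overline{\tau}_{i+1}\tau_{i-1}+\tau_{i+1}\overline{\tau}_{i-1}}{v_i^{1/2}\tau_i}$, $s_i$ fixes $\tau_j,\overline{\tau}_j$ for $j\neq i$; $\pi(\tau_i)=\tau_{i+1}$, $\pi(\overline{\tau}_i)=\overline{\tau}_{i+1}$; $w_0(\overline{\tau}_i)=\dfrac{a_{i+1}^{1/3}(\overline{\tau}_i\tau_{i+1}\tau_{i+2}+u_{i-1}\tau_i\overline{\tau}_{i+1}\tau_{i+2}+u_{i+1}^{-1}\tau_i\tau_{i+1}\overline{\tau}_{i+2})}{a_{i+2}^{1/3}\overline{\tau}_{i+1}\overline{\tau}_{i+2}}$,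 $w_0(\tau_i)=\tau_i$; $r(\tau_i)=\overline{\tau}_i$, $r(\overline{\tau}_i)=\tau_i$; where $u_i=q^{-1/3}c^{-2/3}a_i$, $v_i=q^{1/3}c^{2/3}a_i$. The translation $T_4=rw_0$ fixes $a_0,a_1,a_2$ and maps $c\mapsto qc$. Set $R_1=\pi^2s_1$ (so $R_1^2=T_1=\pi s_2 s_1$) and specialize $a_2=q^{1/2}$; then $R_1$ acts on parameters as $(a_0,a_1,c)\mapsto(q^{1/2}a_0,q^{-1/2}a_1,c)$. Define $\tau^k_N=R_1^kT_4^N(\tau_1)$ for $k,N\in\mathbb{Z}$ (so $\tau_0=\tau^{-2}_0$, $\tau_1=\tau^0_0$, $\tau_2=\tau^{-1}_0$, $\overline{\tau}_0=\tau^{-2}_1$, $\overline{\tau}_1=\tau^0_1$, $\overline{\tau}_2=\tau^{-1}_1$), and put $\alpha_0=a_0^{1/6}$, $\gamma=c^{1/6}$, $Q=q^{1/6}$. *)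

theory Defs
  imports Complex_Main
begin

text \<open>
  Model of the action of the extended affine Weyl group on the parameters
  and tau functions of q-P_III.  A point of the space is a record holding the
  sixth roots alpha_i = a_i^(1/6), gamma = c^(1/6) and the values of
  tau_i, taubar_i (indices read modulo 3).  The fixed parameter q enters via
  Q = q^(1/6).  In these variables
    u_i = Q^-2 gamma^-4 alpha_i^6,  u_i^(1/2) = Q^-1 gamma^-2 alpha_i^3,
    v_i = Q^2 gamma^4 alpha_i^6,    v_i^(1/2) = Q gamma^2 alpha_i^3,
    a_i^(1/3) = alpha_i^2.
  For a group element w, the function act_w sends a point x to the point
  whose coordinates are the values at x of w(coordinate).  Since
  (w1 w2)(F) = w1(w2(F)) and w(F(a,tau)) = F(w(a),w(tau)), the point map of
  w1 w2 is act_w2 composed after act_w1, i.e. act_w2 (act_w1 x).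
\<close>

record pstate =
  al :: "int \<Rightarrow> complex"
  ga :: complex
  tu :: "int \<Rightarrow> complex"
  tb :: "int \<Rightarrow> complex"

definition A :: "pstate \<Rightarrow> int \<Rightarrow> complex" where
  "A x i = al x (i mod 3)"
definition T :: "pstate \<Rightarrow> int \<Rightarrow> complex" where
  "T x i = tu x (i mod 3)"
definition TB :: "pstate \<Rightarrow> int \<Rightarrow> complex" where
  "TB x i = tb x (i mod 3)"

definition uu :: "complex \<Rightarrow> pstate \<Rightarrow> int \<Rightarrow> complex" where
  "uu Q x i = inverse (Q ^ 2) * inverse (ga x ^ 4) * A x i ^ 6"
definition uh :: "complex \<Rightarrow> pstate \<Rightarrow> int \<Rightarrow> complex" where
  "uh Q x i = inverse Q * inverse (ga x ^ 2) * A x i ^ 3"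
definition vv :: "complex \<Rightarrow> pstate \<Rightarrow> int \<Rightarrow> complex" where
  "vv Q x i = Q ^ 2 * ga x ^ 4 * A x i ^ 6"
definition vh :: "complex \<Rightarrow> pstate \<Rightarrow> int \<Rightarrow> complex" where
  "vh Q x i = Q * ga x ^ 2 * A x i ^ 3"

definition act_s :: "complex \<Rightarrow> int \<Rightarrow> pstate \<Rightarrow> pstate" where
  "act_s Q i x =
    \<lparr> al = (\<lambda>j. if j mod 3 = i mod 3 then inverse (A x i) else A x j * A x i),
      ga = ga x,
      tu = (\<lambda>j. if j mod 3 = i mod 3
                 then (uu Q x i * T x (i+1) * TB x (i-1) + TB x (i+1) * T x (i-1))
                      / (uh Q x i * TB x i)
                 else T x j),
      tb = (\<lambda>j. if j mod 3 = i mod 3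
                 then (vv Q x i * TB x (i+1) * T x (i-1) + T x (i+1) * TB x (i-1))
                      / (vh Q x i * T x i)
                 else TB x j) \<rparr>"

definition ok_s :: "int \<Rightarrow> pstate \<Rightarrow> bool" where
  "ok_s i x \<longleftrightarrow> T x i \<noteq> 0 \<and> TB x i \<noteq> 0"

definition act_pi :: "pstate \<Rightarrow> pstate" where
  "act_pi x = \<lparr> al = (\<lambda>j. A x (j+1)), ga = ga x,
                tu = (\<lambda>j. T x (j+1)), tb = (\<lambda>j. TB x (j+1)) \<rparr>"

text \<open>r: swaps tau and taubar; on c it acts by c -> 1/(q c), i.e.
  gamma -> 1/(Q gamma) (so that r(u_i^(1/2)) = v_i^(1/2)).\<close>
definition act_r :: "complex \<Rightarrow> pstate \<Rightarrow> pstate" where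
  "act_r Q x = \<lparr> al = al x, ga = inverse (Q * ga x), tu = tb x, tb = tu x \<rparr>"

text \<open>w_0: fixes a_i and tau_i; acts on c by c -> 1/c, i.e. gamma -> 1/gamma
  (so that T_4 = r w_0 maps c to q c).\<close>
definition act_w0 :: "complex \<Rightarrow> pstate \<Rightarrow> pstate" where
  "act_w0 Q x =
    \<lparr> al = al x, ga = inverse (ga x), tu = tu x,
      tb = (\<lambda>i. A x (i+1) ^ 2
                 * (TB x i * T x (i+1) * T x (i+2)
                    + uu Q x (i-1) * T x i * TB x (i+1) * T x (i+2)
                    + inverse (uu Q x (i+1)) * T x i * T x (i+1) * TB x (i+2))
                 / (A x (i+2) ^ 2 * TB x (i+1) * TB x (i+2))) \<rparr>"

definition ok_w0 :: "pstate \<Rightarrow> bool" where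
  "ok_w0 x \<longleftrightarrow> (\<forall>i. TB x i \<noteq> 0)"

text \<open>R_1 = pi^2 s_1, R_1^-1 = s_1 pi, T_4 = r w_0, T_4^-1 = w_0 r
  (s_1, r, w_0 are involutions, pi^3 = 1).\<close>
definition act_R1 :: "complex \<Rightarrow> pstate \<Rightarrow> pstate" where
  "act_R1 Q x = act_s Q 1 (act_pi (act_pi x))"
definition ok_R1 :: "pstate \<Rightarrow> bool" where
  "ok_R1 x = ok_s 1 (act_pi (act_pi x))"
definition act_R1inv :: "complex \<Rightarrow> pstate \<Rightarrow> pstate" where
  "act_R1inv Q x = act_pi (act_s Q 1 x)"
definition ok_R1inv :: "pstate \<Rightarrow> bool" where
  "ok_R1inv x = ok_s 1 x"
definition act_T4 :: "complex \<Rightarrow> pstate \<Rightarrow> pstate" where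
  "act_T4 Q x = act_w0 Q (act_r Q x)"
definition ok_T4 :: "complex \<Rightarrow> pstate \<Rightarrow> bool" where
  "ok_T4 Q x = ok_w0 (act_r Q x)"
definition act_T4inv :: "complex \<Rightarrow> pstate \<Rightarrow> pstate" where
  "act_T4inv Q x = act_r Q (act_w0 Q x)"
definition ok_T4inv :: "pstate \<Rightarrow> bool" where
  "ok_T4inv x = ok_w0 x"

fun iter_ok :: "('s \<Rightarrow> 's) \<Rightarrow> ('s \<Rightarrow> bool) \<Rightarrow> nat \<Rightarrow> 's \<Rightarrow> 's option" where
  "iter_ok f ok 0 x = Some x"
| "iter_ok f ok (Suc n) x = (if ok x then iter_ok f ok n (f x) else None)"

definition R1pow :: "complex \<Rightarrow> int \<Rightarrow> pstate \<Rightarrow> pstate option" where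
  "R1pow Q k x = (if 0 \<le> k then iter_ok (act_R1 Q) ok_R1 (nat k) x
                  else iter_ok (act_R1inv Q) ok_R1inv (nat (- k)) x)"
definition T4pow :: "complex \<Rightarrow> int \<Rightarrow> pstate \<Rightarrow> pstate option" where
  "T4pow Q N x = (if 0 \<le> N then iter_ok (act_T4 Q) (ok_T4 Q) (nat N) x
                  else iter_ok (act_T4inv Q) ok_T4inv (nat (- N)) x)"

text \<open>tau^k_N = R_1^k T_4^N (tau_1) evaluated at x: the point map of
  R_1^k T_4^N applies R_1's map k times first, then T_4's map N times.
  None means some denominator vanished along the way.\<close>
definition tauKN :: "complex \<Rightarrow> int \<Rightarrow> int \<Rightarrow> pstate \<Rightarrow> complex option" where
  "tauKN Q k N x = map_option (\<lambda>y. T y 1) (Option.bind (R1pow Q k x) (T4pow Q N))"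

text \<open>Initial point with the specialisation a_2 = q^(1/2): with Qh = q^(1/12)
  (Qh^2 = Q), alpha_0 = a_0^(1/6), alpha_1 = Qh/alpha_0 (so a_0 a_1 a_2 = q),
  alpha_2 = Qh.\<close>
definition init :: "complex \<Rightarrow> complex \<Rightarrow> complex \<Rightarrow> complex \<Rightarrow> complex \<Rightarrow> complex
    \<Rightarrow> complex \<Rightarrow> complex \<Rightarrow> complex \<Rightarrow> pstate" where
  "init Qh a0 g t0 t1 t2 b0 b1 b2 =
    \<lparr> al = (\<lambda>j. if j mod 3 = 0 then a0 else if j mod 3 = 1 then Qh / a0 else Qh),
      ga = g,
      tu = (\<lambda>j. if j mod 3 = 0 then t0 else if j mod 3 = 1 then t1 else t2),
      tb = (\<lambda>j. if j mod 3 = 0 then b0 else if j mod 3 = 1 then b1 else b2) \<rparr>"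

end

theory Submission
  imports Defs
begin


lemma A_mod[simp]: "A x (i mod 3) = A x i" by (simp add: A_def)
lemma T_mod[simp]: "T x (i mod 3) = T x i" by (simp add: T_def)
lemma TB_mod[simp]: "TB x (i mod 3) = TB x i" by (simp add: TB_def)

lemma A_modp[simp]: "A x (i mod 3 + j) = A x (i + j)" "A x (i mod 3 - j) = A x (i - j)"
  by (simp_all add: A_def mod_add_left_eq mod_diff_left_eq)
lemma T_modp[simp]: "T x (i mod 3 + j) = T x (i + j)" "T x (i mod 3 - j) = T x (i - j)"
  by (simp_all add: T_def mod_add_left_eq mod_diff_left_eq)
lemma TB_modp[simp]: "TB x (i mod 3 + j) = TB x (i + j)" "TB x (i mod 3 - j) = TB x (i - j)"
  by (simp_all add: TB_def mod_add_left_eq mod_diff_left_eq)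

lemma pi_comp[simp]:
  "A (act_pi x) i = A x (i+1)" "T (act_pi x) i = T x (i+1)" "TB (act_pi x) i = TB x (i+1)"
  "ga (act_pi x) = ga x"
  by (simp_all add: act_pi_def A_def T_def TB_def mod_add_left_eq)

lemma s_comp[simp]:
  "A (act_s Q i x) j = (if j mod 3 = i mod 3 then inverse (A x i) else A x j * A x i)"
  "T (act_s Q i x) j = (if j mod 3 = i mod 3
                 then (uu Q x i * T x (i+1) * TB x (i-1) + TB x (i+1) * T x (i-1))
                      / (uh Q x i * TB x i) else T x j)"
  "TB (act_s Q i x) j = (if j mod 3 = i mod 3
                 then (vv Q x i * TB x (i+1) * T x (i-1) + T x (i+1) * TB x (i-1))
                      / (vh Q x i * T x i) else TB x j)"
  "ga (act_s Q i x) = ga x"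
  by (simp_all add: act_s_def A_def T_def TB_def)

lemma r_comp[simp]:
  "A (act_r Q x) i = A x i" "T (act_r Q x) i = TB x i" "TB (act_r Q x) i = T x i"
  "ga (act_r Q x) = inverse (Q * ga x)"
  by (simp_all add: act_r_def A_def T_def TB_def)

lemma w0_comp[simp]:
  "A (act_w0 Q x) i = A x i" "T (act_w0 Q x) i = T x i" "ga (act_w0 Q x) = inverse (ga x)"
  "TB (act_w0 Q x) i = A x (i+1) ^ 2
                 * (TB x i * T x (i+1) * T x (i+2)
                    + uu Q x (i-1) * T x i * TB x (i+1) * T x (i+2)
                    + inverse (uu Q x (i+1)) * T x i * T x (i+1) * TB x (i+2))
                 / (A x (i+2) ^ 2 * TB x (i+1) * TB x (i+2))"
  apply (simp_all add: act_w0_def A_def T_def TB_def)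
  apply (simp add: TB_def[symmetric] T_def[symmetric] A_def[symmetric] uu_def)
  done

lemma A_num[simp]: "numeral n \<ge> (3::int) \<Longrightarrow> A x (numeral n) = A x (numeral n mod 3)"
  "A x (- numeral n) = A x ((- numeral n) mod 3)" by (simp_all only: A_mod)
lemma T_num[simp]: "numeral n \<ge> (3::int) \<Longrightarrow> T x (numeral n) = T x (numeral n mod 3)"
  "T x (- numeral n) = T x ((- numeral n) mod 3)" by (simp_all only: T_mod)
lemma TB_num[simp]: "numeral n \<ge> (3::int) \<Longrightarrow> TB x (numeral n) = TB x (numeral n mod 3)"
  "TB x (- numeral n) = TB x ((- numeral n) mod 3)" by (simp_all only: TB_mod)

lemma neg1[simp]: "A x (-1) = A x 2" "T x (-1) = T x 2" "TB x (-1) = TB x 2"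
proof -
  have "(-1::int) mod 3 = 2" by simp
  then show "A x (-1) = A x 2" "T x (-1) = T x 2" "TB x (-1) = TB x 2"
    by (metis A_mod, metis T_mod, metis TB_mod)
qed

definition pat :: "complex \<Rightarrow> complex \<Rightarrow> complex \<Rightarrow> pstate \<Rightarrow> bool" where
  "pat Qh a g x \<longleftrightarrow> A x 0 = a \<and> A x 1 = Qh / a \<and> A x 2 = Qh \<and> ga x = g"

definition Rel :: "complex \<Rightarrow> complex \<Rightarrow> complex \<Rightarrow> pstate \<Rightarrow> pstate \<Rightarrow> bool" where
  "Rel Qh a g x y \<longleftrightarrow> pat Qh a g x \<and> pat Qh (Qh*a) g y \<and>
     T y 0 = T x 2 \<and> T y 2 = T x 1 \<and> TB y 0 = TB x 2 \<and> TB y 2 = TB x 1 \<and>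
     T y 1 * (a^3 / (Qh^2 * g^2)) * TB x 0 = a^6/(Qh^4 * g^4) * T x 1 * TB x 2 + TB x 1 * T x 2 \<and>
     TB y 1 * (Qh^2 * g^2 * a^3) * T x 0 = Qh^4 * g^4 * a^6 * TB x 1 * T x 2 + T x 1 * TB x 2"

lemma ok_R1_iff: "ok_R1 x \<longleftrightarrow> T x 0 \<noteq> 0 \<and> TB x 0 \<noteq> 0"
  by (simp add: ok_R1_def ok_s_def)
lemma ok_R1inv_iff: "ok_R1inv x \<longleftrightarrow> T x 1 \<noteq> 0 \<and> TB x 1 \<noteq> 0"
  by (simp add: ok_R1inv_def ok_s_def)
lemma all3: "(\<forall>i. P (i mod 3)) \<longleftrightarrow> P 0 \<and> P 1 \<and> P (2::int)"
proof
  assume "P 0 \<and> P 1 \<and> P 2"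
  then show "\<forall>i. P (i mod 3)"
  proof (intro allI)
    fix i :: int
    have "i mod 3 = 0 \<or> i mod 3 = 1 \<or> i mod 3 = 2" by auto
    then show "P (i mod 3)" using \<open>P 0 \<and> P 1 \<and> P 2\<close> by auto
  qed
next
  assume "\<forall>i. P (i mod 3)" then show "P 0 \<and> P 1 \<and> P 2"
  proof -
    assume h: "\<forall>i. P (i mod 3)"
    have "P (0 mod 3)" "P (1 mod 3)" "P (2 mod 3)" using h by blast+
    then show ?thesis by simp
  qed
qed
lemma ok_T4_iff: "ok_T4 Q x \<longleftrightarrow> T x 0 \<noteq> 0 \<and> T x 1 \<noteq> 0 \<and> T x 2 \<noteq> 0"
proof -
  have "ok_T4 Q x \<longleftrightarrow> (\<forall>i. T x (i mod 3) \<noteq> 0)" by (simp add: ok_T4_def ok_w0_def)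
  also have "\<dots> \<longleftrightarrow> T x 0 \<noteq> 0 \<and> T x 1 \<noteq> 0 \<and> T x 2 \<noteq> 0" by (rule all3)
  finally show ?thesis .
qed
lemma ok_T4inv_iff: "ok_T4inv x \<longleftrightarrow> TB x 0 \<noteq> 0 \<and> TB x 1 \<noteq> 0 \<and> TB x 2 \<noteq> 0"
proof -
  have "ok_T4inv x \<longleftrightarrow> (\<forall>i. TB x (i mod 3) \<noteq> 0)" by (simp add: ok_T4inv_def ok_w0_def)
  also have "\<dots> \<longleftrightarrow> TB x 0 \<noteq> 0 \<and> TB x 1 \<noteq> 0 \<and> TB x 2 \<noteq> 0" by (rule all3)
  finally show ?thesis .
qed

lemma I1:
  assumes "Qh \<noteq> 0" "a \<noteq> 0" "g \<noteq> 0" "pat Qh a g x" "ok_R1 x"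
  shows "Rel Qh a g x (act_R1 (Qh^2) x)"
  using assms unfolding Rel_def pat_def ok_R1_iff act_R1_def
  apply (simp add: uu_def uh_def vv_def vh_def)
  apply (simp add: field_simps)
  done

lemma I2:
  assumes "Qh \<noteq> 0" "a \<noteq> 0" "g \<noteq> 0" "pat Qh (Qh*a) g y" "ok_R1inv y"
  shows "Rel Qh a g (act_R1inv (Qh^2) y) y"
  using assms unfolding Rel_def pat_def ok_R1inv_iff act_R1inv_def
  apply (simp add: uu_def uh_def vv_def vh_def)
  apply (simp add: field_simps)
  done



lemma I3:
  assumes nz: "Qh \<noteq> 0" "a \<noteq> 0" "g \<noteq> 0" and R: "Rel Qh a g x y"
    and ox: "ok_T4 (Qh^2) x" and oy: "ok_T4 (Qh^2) y"
  shows "Rel Qh a (Qh^2*g) (act_T4 (Qh^2) x) (act_T4 (Qh^2) y)"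
proof -
  from R have px: "A x 0 = a" "A x 1 = Qh / a" "A x 2 = Qh" "ga x = g"
    and py: "A y 0 = Qh*a" "A y 1 = Qh / (Qh*a)" "A y 2 = Qh" "ga y = g"
    and e: "T y 0 = T x 2" "T y 2 = T x 1" "TB y 0 = TB x 2" "TB y 2 = TB x 1"
    and r1: "T y 1 * (a^3 / (Qh^2 * g^2)) * TB x 0 = a^6/(Qh^4 * g^4) * T x 1 * TB x 2 + TB x 1 * T x 2"
    and r2: "TB y 1 * (Qh^2 * g^2 * a^3) * T x 0 = Qh^4 * g^4 * a^6 * TB x 1 * T x 2 + T x 1 * TB x 2"
    unfolding Rel_def pat_def by auto
  from ox have tx: "T x 0 \<noteq> 0" "T x 1 \<noteq> 0" "T x 2 \<noteq> 0" by (auto simp: ok_T4_iff)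
  from oy have ty: "T y 0 \<noteq> 0" "T y 1 \<noteq> 0" "T y 2 \<noteq> 0" by (auto simp: ok_T4_iff)
  have r1': "T y 1 * (TB x 0 * (a ^ 3 * (Qh ^ 4 * g ^ 4))) =
      T x 1 * (TB x 2 * (Qh^2 * (g^2 * a ^ 6))) + TB x 1 * (T x 2 * (Qh^2 * (g^2 * (Qh ^ 4 * g ^ 4))))"
    using r1 nz by (simp add: field_simps)
  have r2': "TB y 1 * (Qh^2 * g^2 * a^3) * T x 0 = Qh^4 * g^4 * a^6 * TB x 1 * T x 2 + T x 1 * TB x 2"
    by (rule r2)
  show ?thesis unfolding Rel_def pat_def act_T4_def
      using nz tx ty px py 
      apply (simp add: e uu_def px py)
      apply (simp add: field_simps)
      apply (intro conjI)
      using r1' r2' apply algebra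
      using r1' r2' apply algebra
      using r1' r2' apply algebra
      using r1' r2' apply algebra
      done
qed
lemma I4:
  assumes nz: "Qh \<noteq> 0" "a \<noteq> 0" "g \<noteq> 0" and R: "Rel Qh a g x y"
    and ox: "ok_T4inv x" and oy: "ok_T4inv y"
  shows "Rel Qh a (g/Qh^2) (act_T4inv (Qh^2) x) (act_T4inv (Qh^2) y)"
proof -
  from R have px: "A x 0 = a" "A x 1 = Qh / a" "A x 2 = Qh" "ga x = g"
    and py: "A y 0 = Qh*a" "A y 1 = Qh / (Qh*a)" "A y 2 = Qh" "ga y = g"
    and e: "T y 0 = T x 2" "T y 2 = T x 1" "TB y 0 = TB x 2" "TB y 2 = TB x 1"
    and r1: "T y 1 * (a^3 / (Qh^2 * g^2)) * TB x 0 = a^6/(Qh^4 * g^4) * T x 1 * TB x 2 + TB x 1 * T x 2"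
    and r2: "TB y 1 * (Qh^2 * g^2 * a^3) * T x 0 = Qh^4 * g^4 * a^6 * TB x 1 * T x 2 + T x 1 * TB x 2"
    unfolding Rel_def pat_def by auto
  from ox have tx: "TB x 0 \<noteq> 0" "TB x 1 \<noteq> 0" "TB x 2 \<noteq> 0" by (auto simp: ok_T4inv_iff)
  from oy have ty: "TB y 0 \<noteq> 0" "TB y 1 \<noteq> 0" "TB y 2 \<noteq> 0" by (auto simp: ok_T4inv_iff)
  have r1': "T y 1 * (TB x 0 * (a ^ 3 * (Qh ^ 4 * g ^ 4))) =
      T x 1 * (TB x 2 * (Qh^2 * (g^2 * a ^ 6))) + TB x 1 * (T x 2 * (Qh^2 * (g^2 * (Qh ^ 4 * g ^ 4))))"
    using r1 nz by (simp add: field_simps)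
  have r2': "TB y 1 * (Qh^2 * g^2 * a^3) * T x 0 = Qh^4 * g^4 * a^6 * TB x 1 * T x 2 + T x 1 * TB x 2"
    by (rule r2)
  show ?thesis unfolding Rel_def pat_def act_T4inv_def
      using nz tx ty px py 
      apply (simp add: e uu_def px py)
      apply (simp add: field_simps)
      apply (intro conjI)
      using r1' r2' apply algebra
      using r1' r2' apply algebra
      using r1' r2' apply algebra
      using r1' r2' apply algebra
      done
qed


lemma Rel_parts:
  assumes "Rel Qh a g x y" "Qh \<noteq> 0" "a \<noteq> 0" "g \<noteq> 0"
  shows "A x 0 = a" "A x 1 = Qh / a" "A x 2 = Qh" "ga x = g"
    "A y 0 = Qh*a" "A y 1 = Qh / (Qh*a)" "A y 2 = Qh" "ga y = g"
    "T y 0 = T x 2" "T y 2 = T x 1" "TB y 0 = TB x 2" "TB y 2 = TB x 1"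
    "T y 1 * (TB x 0 * (a ^ 3 * (Qh ^ 4 * g ^ 4))) =
      T x 1 * (TB x 2 * (Qh^2 * (g^2 * a ^ 6))) + TB x 1 * (T x 2 * (Qh^2 * (g^2 * (Qh ^ 4 * g ^ 4))))"
    "TB y 1 * (Qh^2 * g^2 * a^3) * T x 0 = Qh^4 * g^4 * a^6 * TB x 1 * T x 2 + T x 1 * TB x 2"
proof -
  note R = assms(1)[unfolded Rel_def pat_def]
  show "A x 0 = a" "A x 1 = Qh / a" "A x 2 = Qh" "ga x = g"
    "A y 0 = Qh*a" "A y 1 = Qh / (Qh*a)" "A y 2 = Qh" "ga y = g"
    "T y 0 = T x 2" "T y 2 = T x 1" "TB y 0 = TB x 2" "TB y 2 = TB x 1"
    "TB y 1 * (Qh^2 * g^2 * a^3) * T x 0 = Qh^4 * g^4 * a^6 * TB x 1 * T x 2 + T x 1 * TB x 2"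
    using R by auto
  have r1: "T y 1 * (a^3 / (Qh^2 * g^2)) * TB x 0 = a^6/(Qh^4 * g^4) * T x 1 * TB x 2 + TB x 1 * T x 2"
    using R by auto
  then show "T y 1 * (TB x 0 * (a ^ 3 * (Qh ^ 4 * g ^ 4))) =
      T x 1 * (TB x 2 * (Qh^2 * (g^2 * a ^ 6))) + TB x 1 * (T x 2 * (Qh^2 * (g^2 * (Qh ^ 4 * g ^ 4))))"
    using assms(2-4) by (simp add: field_simps)
qed

lemma eqs_row:
  assumes R: "Rel Qh a g x y" and nz: "Qh \<noteq> 0" "a \<noteq> 0" "g \<noteq> 0"
  shows "g^2 * Qh^2 / a^3 * T y 1 * TB x 0 - Qh^4 * g^4 / a^6 * T x 2 * TB x 1 - TB x 2 * T x 1 = 0"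
    and "1/(Qh^2 * g^2 * a^3) * TB y 1 * T x 0 - 1/(Qh^4 * g^4 * a^6) * T x 1 * TB x 2 - TB x 1 * T x 2 = 0"
proof -
  note p = Rel_parts[OF R nz]
  show "g^2 * Qh^2 / a^3 * T y 1 * TB x 0 - Qh^4 * g^4 / a^6 * T x 2 * TB x 1 - TB x 2 * T x 1 = 0"
    using nz p(13) by (simp add: field_simps) algebra
  show "1/(Qh^2 * g^2 * a^3) * TB y 1 * T x 0 - 1/(Qh^4 * g^4 * a^6) * T x 1 * TB x 2 - TB x 1 * T x 2 = 0"
    using nz p(14) by (simp add: field_simps) algebra
qed

lemma eqs_up:
  assumes R: "Rel Qh a g x y" and nz: "Qh \<noteq> 0" "a \<noteq> 0" "g \<noteq> 0" and ok: "ok_T4 (Qh^2) x"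
  shows "TB (act_T4 (Qh^2) x) 2 * T x 1 - a/(Qh^4 * g^2) * TB y 1 * TB x 0 - Qh^8 * g^4 / a^2 * TB x 2 * TB x 1 = 0"
    and "TB (act_T4 (Qh^2) x) 1 * T x 2 - Qh^4 * g^2 * a * TB y 1 * TB x 0 - 1/(Qh^8 * g^4 * a^2) * TB x 1 * TB x 2 = 0"
proof -
  note p = Rel_parts[OF R nz]
  from ok have tx: "T x 0 \<noteq> 0" "T x 1 \<noteq> 0" "T x 2 \<noteq> 0" by (auto simp: ok_T4_iff)
  show "TB (act_T4 (Qh^2) x) 2 * T x 1 - a/(Qh^4 * g^2) * TB y 1 * TB x 0 - Qh^8 * g^4 / a^2 * TB x 2 * TB x 1 = 0"
    using nz tx unfolding act_T4_def apply (simp add: p uu_def) apply (simp add: field_simps) using p(14) by algebra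
  show "TB (act_T4 (Qh^2) x) 1 * T x 2 - Qh^4 * g^2 * a * TB y 1 * TB x 0 - 1/(Qh^8 * g^4 * a^2) * TB x 1 * TB x 2 = 0"
    using nz tx unfolding act_T4_def apply (simp add: p uu_def) apply (simp add: field_simps) using p(14) by algebra
qed

lemma eqs_down:
  assumes R: "Rel Qh a g x y" and nz: "Qh \<noteq> 0" "a \<noteq> 0" "g \<noteq> 0" and ok: "ok_T4inv x"
  shows "TB x 2 * T (act_T4inv (Qh^2) x) 1 - a/g^2 * T y 1 * T x 0 - g^4/a^2 * T x 2 * T x 1 = 0"
    and "TB x 1 * T (act_T4inv (Qh^2) x) 2 - g^2 * a * T y 1 * T x 0 - 1/(g^4 * a^2) * T x 1 * T x 2 = 0"
proof -
  note p = Rel_parts[OF R nz]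
  from ok have tx: "TB x 0 \<noteq> 0" "TB x 1 \<noteq> 0" "TB x 2 \<noteq> 0" by (auto simp: ok_T4inv_iff)
  show "TB x 2 * T (act_T4inv (Qh^2) x) 1 - a/g^2 * T y 1 * T x 0 - g^4/a^2 * T x 2 * T x 1 = 0"
    using nz tx unfolding act_T4inv_def apply (simp add: p uu_def) apply (simp add: field_simps) using p(13) by algebra
  show "TB x 1 * T (act_T4inv (Qh^2) x) 2 - g^2 * a * T y 1 * T x 0 - 1/(g^4 * a^2) * T x 1 * T x 2 = 0"
    using nz tx unfolding act_T4inv_def apply (simp add: p uu_def) apply (simp add: field_simps) using p(13) by algebra
qed


lemma it_last: "iter_ok f ok (Suc n) x = Option.bind (iter_ok f ok n x) (\<lambda>y. if ok y then Some (f y) else None)"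
proof (induction n arbitrary: x)
  case 0 show ?case by simp
next
  case (Suc n)
  have "iter_ok f ok (Suc (Suc n)) x = (if ok x then iter_ok f ok (Suc n) (f x) else None)"
    by (rule iter_ok.simps(2))
  also have "\<dots> = (if ok x then Option.bind (iter_ok f ok n (f x)) (\<lambda>y. if ok y then Some (f y) else None) else None)"
    using Suc.IH by simp
  also have "\<dots> = Option.bind (iter_ok f ok (Suc n) x) (\<lambda>y. if ok y then Some (f y) else None)"
    by simp
  finally show ?case .
qed

lemma it_lastD: "iter_ok f ok (Suc n) x = Some y \<Longrightarrow> \<exists>z. iter_ok f ok n x = Some z \<and> ok z \<and> y = f z"
proof -
  assume h: "iter_ok f ok (Suc n) x = Some y"
  show ?thesis
  proof (cases "iter_ok f ok n x")
    case None then show ?thesis using h by (simp only: it_last) simp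
  next
    case (Some z) then show ?thesis using h by (simp only: it_last) (auto split: if_splits)
  qed
qed

lemma it_inv2:
  assumes "iter_ok f ok n x = Some y" "iter_ok f ok n x' = Some y'" "Inv 0 x x'"
    "\<And>m z z'. Inv m z z' \<Longrightarrow> ok z \<Longrightarrow> ok z' \<Longrightarrow> Inv (Suc m) (f z) (f z')"
  shows "Inv n y y'"
  using assms(1,2)
proof (induction n arbitrary: y y')
  case 0 then show ?case using assms(3) by simp
next
  case (Suc n)
  from it_lastD[OF Suc.prems(1)] obtain z where z: "iter_ok f ok n x = Some z" "ok z" "y = f z" by blast
  from it_lastD[OF Suc.prems(2)] obtain z' where z': "iter_ok f ok n x' = Some z'" "ok z'" "y' = f z'" by blast
  show ?case using Suc.IH[OF z(1) z'(1)] assms(4) z z' by simp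
qed

definition powf :: "('s \<Rightarrow> 's) \<Rightarrow> ('s \<Rightarrow> bool) \<Rightarrow> ('s \<Rightarrow> 's) \<Rightarrow> ('s \<Rightarrow> bool) \<Rightarrow> int \<Rightarrow> 's \<Rightarrow> 's option" where
  "powf f ok g okg k x = (if 0 \<le> k then iter_ok f ok (nat k) x else iter_ok g okg (nat (- k)) x)"

lemma R1pow_powf: "R1pow Q = powf (act_R1 Q) ok_R1 (act_R1inv Q) ok_R1inv"
  by (auto simp: fun_eq_iff R1pow_def powf_def)
lemma T4pow_powf: "T4pow Q = powf (act_T4 Q) (ok_T4 Q) (act_T4inv Q) ok_T4inv"
  by (auto simp: fun_eq_iff T4pow_def powf_def)

lemma powf_inv2:
  assumes "powf f ok g okg a x = Some y" "powf f ok g okg a x' = Some y'" "Inv 0 x x'"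
    "\<And>m z z'. Inv m z z' \<Longrightarrow> ok z \<Longrightarrow> ok z' \<Longrightarrow> Inv (m+1) (f z) (f z')"
    "\<And>m z z'. Inv m z z' \<Longrightarrow> okg z \<Longrightarrow> okg z' \<Longrightarrow> Inv (m-1) (g z) (g z')"
  shows "Inv a y y'"
proof (cases "0 \<le> a")
  case True
  have "(\<lambda>n z z'. Inv (int n) z z') (nat a) y y'"
    apply (rule it_inv2[where f=f and ok=ok and x=x and x'=x'])
    using assms(1) True apply (simp add: powf_def)
    using assms(2) True apply (simp add: powf_def)
    using assms(3) apply simp
    using assms(4) by (metis of_nat_Suc add.commute)
  then show ?thesis using True by simp
next
  case False
  have "(\<lambda>n z z'. Inv (- int n) z z') (nat (-a)) y y'"
    apply (rule it_inv2[where f=g and ok=okg and x=x and x'=x'])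
    using assms False apply (auto simp: powf_def)
    by (metis assms(5) diff_conv_add_uminus of_nat_Suc uminus_add_conv_diff minus_diff_eq add.commute)
  then show ?thesis using False by simp
qed

lemma powf_inv1:
  assumes "powf f ok g okg a x = Some y" "Inv 0 x"
    "\<And>m z. Inv m z \<Longrightarrow> ok z \<Longrightarrow> Inv (m+1) (f z)"
    "\<And>m z. Inv m z \<Longrightarrow> okg z \<Longrightarrow> Inv (m-1) (g z)"
  shows "Inv a y"
  using powf_inv2[where Inv="\<lambda>m z z'. Inv m z", OF assms(1) assms(1) assms(2)] assms(3,4) by blast

lemma powf_step:
  assumes "powf f ok g okg a x = Some y" "powf f ok g okg (a+1) x = Some y'"
  shows "(0 \<le> a \<and> ok y \<and> y' = f y) \<or> (a < 0 \<and> okg y' \<and> y = g y')"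
proof (cases "0 \<le> a")
  case True
  then have "nat (a+1) = Suc (nat a)" by simp
  with assms True have "iter_ok f ok (Suc (nat a)) x = Some y'" "iter_ok f ok (nat a) x = Some y"
    by (auto simp: powf_def)
  then show ?thesis using it_lastD[of f ok "nat a" x y'] True by auto
next
  case False
  then have e: "nat (-a) = Suc (nat (-(a+1)))" by simp
  have "iter_ok g okg (nat (-(a+1))) x = Some y'"
  proof (cases "a+1 = 0")
    case True then show ?thesis using assms(2) by (simp add: powf_def)
  next
    case False then show ?thesis using assms(2) \<open>\<not> 0 \<le> a\<close> by (simp add: powf_def)
  qed
  moreover have "iter_ok g okg (Suc (nat (-(a+1)))) x = Some y"
    using assms(1) False e by (simp add: powf_def)
  ultimately show ?thesis using it_lastD[of g okg "nat (-(a+1))" x y] False by auto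
qed



lemma Rel_pat: "Rel Qh a g x y \<Longrightarrow> pat Qh a g x \<and> pat Qh (Qh*a) g y"
  by (simp add: Rel_def)

lemma pat_R1pow:
  assumes nz: "Qh \<noteq> 0" "a0 \<noteq> 0" "g \<noteq> 0" and p: "pat Qh a0 g x"
    and r: "R1pow (Qh^2) k x = Some y"
  shows "pat Qh (a0 * Qh powi k) g y"
proof -
  have "(\<lambda>m z. pat Qh (a0 * Qh powi m) g z) k y"
  proof (rule powf_inv1[where x=x])
    show "powf (act_R1 (Qh^2)) ok_R1 (act_R1inv (Qh^2)) ok_R1inv k x = Some y"
      using r by (simp add: R1pow_powf)
    show "pat Qh (a0 * Qh powi 0) g x" using p by simp
  next
    fix m z assume h: "pat Qh (a0 * Qh powi m) g z" "ok_R1 z"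
    have "a0 * Qh powi m \<noteq> 0" using nz by (simp add: power_int_not_zero)
    from Rel_pat[OF I1[OF nz(1) this nz(3) h]] 
    show "pat Qh (a0 * Qh powi (m+1)) g (act_R1 (Qh^2) z)"
      using nz by (simp add: power_int_add_1 mult_ac)
  next
    fix m z assume h: "pat Qh (a0 * Qh powi m) g z" "ok_R1inv z"
    have nz2: "a0 * Qh powi (m-1) \<noteq> 0" using nz by (simp add: power_int_not_zero)
    have "Qh * Qh powi (m-1) = Qh powi m"
      using power_int_minus_mult[of Qh m] nz by (simp add: mult.commute)
    then have eq: "Qh * (a0 * Qh powi (m-1)) = a0 * Qh powi m" by (metis mult.left_commute)
    have "pat Qh (Qh * (a0 * Qh powi (m-1))) g z" unfolding eq by (rule h(1))
    from Rel_pat[OF I2[OF nz(1) nz2 nz(3) this h(2)]]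
    show "pat Qh (a0 * Qh powi (m-1)) g (act_R1inv (Qh^2) z)" by simp
  qed
  then show ?thesis by simp
qed

lemma pat_T4: "Qh \<noteq> 0 \<Longrightarrow> pat Qh a g z \<Longrightarrow> pat Qh a (Qh^2*g) (act_T4 (Qh^2) z)"
  by (simp add: pat_def act_T4_def)
lemma pat_T4inv: "Qh \<noteq> 0 \<Longrightarrow> pat Qh a g z \<Longrightarrow> pat Qh a (g/Qh^2) (act_T4inv (Qh^2) z)"
  by (simp add: pat_def act_T4inv_def field_simps)

lemma pw2: "(Qh::complex) \<noteq> 0 \<Longrightarrow> Qh powi (2*(m+1)) = Qh^2 * Qh powi (2*m)"
proof -
  assume "Qh \<noteq> 0"
  then have "Qh powi (2*m + 2) = Qh powi (2*m) * Qh powi 2" by (rule power_int_add[of Qh "2*m" 2, OF disjI1])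
  then show ?thesis by (simp add: distrib_left mult.commute)
qed
lemma pw2': "(Qh::complex) \<noteq> 0 \<Longrightarrow> Qh powi (2*(m-1)) = Qh powi (2*m) / Qh^2"
proof -
  assume "Qh \<noteq> 0"
  then have "Qh powi (2*m - 2) = Qh powi (2*m) / Qh powi 2" by (rule power_int_diff[of Qh "2*m" 2, OF disjI1])
  then show ?thesis by (simp add: right_diff_distrib)
qed

lemma pat_T4pow:
  assumes nz: "Qh \<noteq> 0" and p: "pat Qh a g x" and r: "T4pow (Qh^2) M x = Some y"
  shows "pat Qh a (g * Qh powi (2*M)) y"
proof -
  have "(\<lambda>m z. pat Qh a (g * Qh powi (2*m)) z) M y"
  proof (rule powf_inv1[where x=x and Inv="\<lambda>m z. pat Qh a (g * Qh powi (2*m)) z"])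
    show "powf (act_T4 (Qh^2)) (ok_T4 (Qh^2)) (act_T4inv (Qh^2)) ok_T4inv M x = Some y"
      using r by (simp add: T4pow_powf)
    show "pat Qh a (g * Qh powi (2*0)) x" using p by simp
  next
    fix m z assume h: "pat Qh a (g * Qh powi (2*m)) z"
    show "pat Qh a (g * Qh powi (2*(m+1))) (act_T4 (Qh^2) z)"
      apply (subst pw2[OF nz(1)])
      using pat_T4[OF nz h] nz by (simp add: mult_ac)
  next
    fix m z assume h: "pat Qh a (g * Qh powi (2*m)) z"
    show "pat Qh a (g * Qh powi (2*(m-1))) (act_T4inv (Qh^2) z)"
      apply (subst pw2'[OF nz(1)])
      using pat_T4inv[OF nz h] nz by simp
  qed
  then show ?thesis by simp
qed

lemma Rel_T4pow:
  assumes nz: "Qh \<noteq> 0" "a \<noteq> 0" "g \<noteq> 0" and R: "Rel Qh a g x x'"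
    and r: "T4pow (Qh^2) M x = Some y" and r': "T4pow (Qh^2) M x' = Some y'"
  shows "Rel Qh a (g * Qh powi (2*M)) y y'"
proof -
  have "(\<lambda>m z z'. Rel Qh a (g * Qh powi (2*m)) z z') M y y'"
  proof (rule powf_inv2[where x=x and x'=x' and Inv="\<lambda>m z z'. Rel Qh a (g * Qh powi (2*m)) z z'"])
    show "powf (act_T4 (Qh^2)) (ok_T4 (Qh^2)) (act_T4inv (Qh^2)) ok_T4inv M x = Some y"
      using r by (simp add: T4pow_powf)
    show "powf (act_T4 (Qh^2)) (ok_T4 (Qh^2)) (act_T4inv (Qh^2)) ok_T4inv M x' = Some y'"
      using r' by (simp add: T4pow_powf)
    show "Rel Qh a (g * Qh powi (2*0)) x x'" using R by simp
  next
    fix m z z' assume h: "Rel Qh a (g * Qh powi (2*m)) z z'" "ok_T4 (Qh^2) z" "ok_T4 (Qh^2) z'"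
    have "g * Qh powi (2*m) \<noteq> 0" using nz by (simp add: power_int_not_zero)
    from I3[OF nz(1,2) this h]
    show "Rel Qh a (g * Qh powi (2*(m+1))) (act_T4 (Qh^2) z) (act_T4 (Qh^2) z')"
      apply (subst pw2[OF nz(1)])
      using nz by (simp add: mult_ac)
  next
    fix m z z' assume h: "Rel Qh a (g * Qh powi (2*m)) z z'" "ok_T4inv z" "ok_T4inv z'"
    have "g * Qh powi (2*m) \<noteq> 0" using nz by (simp add: power_int_not_zero)
    from I4[OF nz(1,2) this h]
    show "Rel Qh a (g * Qh powi (2*(m-1))) (act_T4inv (Qh^2) z) (act_T4inv (Qh^2) z')"
      apply (subst pw2'[OF nz(1)])
      using nz by simp
  qed
  then show ?thesis by simp
qed

lemma Rel_R1pow_step: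
  assumes nz: "Qh \<noteq> 0" "a0 \<noteq> 0" "g \<noteq> 0" and p: "pat Qh a0 g x"
    and r: "R1pow (Qh^2) k x = Some y" and r': "R1pow (Qh^2) (k+1) x = Some y'"
  shows "Rel Qh (a0 * Qh powi k) g y y'"
proof -
  have pk: "pat Qh (a0 * Qh powi k) g y" by (rule pat_R1pow[OF nz p r])
  have pk1: "pat Qh (a0 * Qh powi (k+1)) g y'" by (rule pat_R1pow[OF nz p r'])
  have nzk: "a0 * Qh powi k \<noteq> 0" using nz by (simp add: power_int_not_zero)
  have e: "a0 * Qh powi (k+1) = Qh * (a0 * Qh powi k)" using nz by (simp add: power_int_add_1 mult_ac)
  from powf_step[OF r[unfolded R1pow_powf] r'[unfolded R1pow_powf]]
  show ?thesis
  proof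
    assume "0 \<le> k \<and> ok_R1 y \<and> y' = act_R1 (Qh\<^sup>2) y"
    then show ?thesis using I1[OF nz(1) nzk nz(3) pk] by simp
  next
    assume "k < 0 \<and> ok_R1inv y' \<and> y = act_R1inv (Qh\<^sup>2) y'"
    then show ?thesis using I2[OF nz(1) nzk nz(3) pk1[unfolded e]] by simp
  qed
qed

lemma vert:
  assumes r: "T4pow Q M x = Some z" and r': "T4pow Q (M+1) x = Some z'"
  shows "T z' i = TB z i"
    and "(0 \<le> M \<and> ok_T4 Q z \<and> z' = act_T4 Q z) \<or> (M < 0 \<and> ok_T4inv z' \<and> z = act_T4inv Q z')"
proof -
  from powf_step[OF r[unfolded T4pow_powf] r'[unfolded T4pow_powf]]
  show "(0 \<le> M \<and> ok_T4 Q z \<and> z' = act_T4 Q z) \<or> (M < 0 \<and> ok_T4inv z' \<and> z = act_T4inv Q z')" .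
  then show "T z' i = TB z i" by (auto simp: act_T4_def act_T4inv_def)
qed


lemma tau_some:
  assumes "tauKN Q k M x \<noteq> None"
  shows "\<exists>y z. R1pow Q k x = Some y \<and> T4pow Q M y = Some z \<and> the (tauKN Q k M x) = T z 1"
  using assms unfolding tauKN_def
  by (cases "R1pow Q k x"; cases "Option.bind (R1pow Q k x) (T4pow Q M)") auto

lemma pat_init: "pat Qh a0 g (init Qh a0 g t0 t1 t2 b0 b1 b2)"
  by (simp add: pat_def init_def A_def)

lemma pw_lin: "(Qh::complex) \<noteq> 0 \<Longrightarrow> Qh powi (k*c1 + N*c2 + c3) = (Qh powi k) powi c1 * (Qh powi N) powi c2 * Qh powi c3"
  by (simp add: power_int_add power_int_mult)

lemma pwc: "(Qh::complex) \<noteq> 0 \<Longrightarrow> e = k*c1 + N*c2 + c3 \<Longrightarrow> Qh powi e = (Qh powi k) powi c1 * (Qh powi N) powi c2 * Qh powi c3"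
  using pw_lin by simp
lemma pwc2: "(Qh::complex) \<noteq> 0 \<Longrightarrow> 2*e = k*c1 + N*c2 + c3 \<Longrightarrow> (Qh^2) powi e = (Qh powi k) powi c1 * (Qh powi N) powi c2 * Qh powi c3"
  using pw_lin[of Qh k c1 N c2 c3] by (simp add: power_int_power)


theorem propositionB7:
  fixes Qh \<alpha>0 \<gamma> t0 t1 t2 b0 b1 b2 :: complex and k N :: int
  assumes "Qh \<noteq> 0" and "\<alpha>0 \<noteq> 0" and "\<gamma> \<noteq> 0"
    and "\<forall>j\<in>{k..k+3}. \<forall>M\<in>{N-1..N+1}.
           tauKN (Qh^2) j M (init Qh \<alpha>0 \<gamma> t0 t1 t2 b0 b1 b2) \<noteq> None"
  shows "let \<tau> = (\<lambda>j M. the (tauKN (Qh^2) j M (init Qh \<alpha>0 \<gamma> t0 t1 t2 b0 b1 b2)));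
             Q = Qh^2
         in \<tau> (k+1) (N+1) * \<tau> (k+2) (N-1)
              - Qh powi (k-4*N+2) * \<gamma> powi (-2) * \<alpha>0 * \<tau> (k+3) N * \<tau> k N
              - Q powi (-k+4*N-2) * \<gamma> ^ 4 * \<alpha>0 powi (-2) * \<tau> (k+1) N * \<tau> (k+2) N = 0
          \<and> \<tau> (k+2) (N+1) * \<tau> (k+1) (N-1)
              - Qh powi (k+4*N+2) * \<gamma> ^ 2 * \<alpha>0 * \<tau> (k+3) N * \<tau> k N
              - Q powi (-k-4*N-2) * \<gamma> powi (-4) * \<alpha>0 powi (-2) * \<tau> (k+2) N * \<tau> (k+1) N = 0
          \<and> Qh powi (-(3*k-4*N+4)) * \<gamma> ^ 2 * \<alpha>0 powi (-3) * \<tau> (k+3) N * \<tau> k (N+1)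
              - Q powi (-3*k+4*N-4) * \<gamma> ^ 4 * \<alpha>0 powi (-6) * \<tau> (k+1) N * \<tau> (k+2) (N+1)
              - \<tau> (k+1) (N+1) * \<tau> (k+2) N = 0
          \<and> Qh powi (-(3*k+4*N+8)) * \<gamma> powi (-2) * \<alpha>0 powi (-3) * \<tau> (k+3) (N+1) * \<tau> k N
              - Q powi (-3*k-4*N-8) * \<gamma> powi (-4) * \<alpha>0 powi (-6) * \<tau> (k+2) N * \<tau> (k+1) (N+1)
              - \<tau> (k+2) (N+1) * \<tau> (k+1) N = 0"
proof -
  note nz = assms(1,2,3)
  define x0 where "x0 = init Qh \<alpha>0 \<gamma> t0 t1 t2 b0 b1 b2"
  have px0: "pat Qh \<alpha>0 \<gamma> x0" unfolding x0_def by (rule pat_init)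
  have ex: "\<exists>y z. R1pow (Qh^2) (k+j) x0 = Some y \<and> T4pow (Qh^2) M y = Some z \<and>
               the (tauKN (Qh^2) (k+j) M x0) = T z 1"
    if "0 \<le> j" "j \<le> 3" "N - 1 \<le> M" "M \<le> N + 1" for j M
    using tau_some[of "Qh^2" "k+j" M x0] assms(4) that unfolding x0_def by auto
  define Y where "Y j = the (R1pow (Qh^2) (k+j) x0)" for j
  define Z where "Z j M = the (T4pow (Qh^2) M (Y j))" for j M
  have hY: "R1pow (Qh^2) (k+j) x0 = Some (Y j)" if "0 \<le> j" "j \<le> 3" for j
    using ex[OF that, of N] unfolding Y_def by auto
  have hZ: "T4pow (Qh^2) M (Y j) = Some (Z j M)" if "0 \<le> j" "j \<le> 3" "N - 1 \<le> M" "M \<le> N + 1" for j M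
    using ex[OF that] hY[OF that(1,2)] unfolding Z_def by auto
  have ht: "the (tauKN (Qh^2) (k+j) M x0) = T (Z j M) 1" if "0 \<le> j" "j \<le> 3" "N - 1 \<le> M" "M \<le> N + 1" for j M
    using ex[OF that] hY[OF that(1,2)] hZ[OF that] by auto
  have nza: "\<alpha>0 * Qh powi (k+j) \<noteq> 0" for j using nz by (simp add: power_int_not_zero)
  have nzg: "\<gamma> * Qh powi (2*M) \<noteq> 0" for M using nz by (simp add: power_int_not_zero)
  have RY: "Rel Qh (\<alpha>0 * Qh powi (k+j)) \<gamma> (Y j) (Y (j+1))" if "0 \<le> j" "j \<le> 2" for j
    using Rel_R1pow_step[OF nz px0 hY[of j] ] hY[of "j+1"] that by (simp add: add.assoc)
  have RZ: "Rel Qh (\<alpha>0 * Qh powi (k+j)) (\<gamma> * Qh powi (2*M)) (Z j M) (Z (j+1) M)"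
    if "0 \<le> j" "j \<le> 2" "N - 1 \<le> M" "M \<le> N + 1" for j M
    using Rel_T4pow[OF nz(1) nza nz(3) RY[OF that(1,2)] hZ[of j M] hZ[of "j+1" M]] that by simp
  have V: "T (Z j (M+1)) i = TB (Z j M) i" if "0 \<le> j" "j \<le> 3" "N - 1 \<le> M" "M \<le> N" for j M i
    using vert(1)[OF hZ[of j M] hZ[of j "M+1"]] that by simp
  have V2: "(0 \<le> N - 1 \<and> ok_T4 (Qh^2) (Z 2 (N-1)) \<and> Z 2 N = act_T4 (Qh^2) (Z 2 (N-1))) \<or>
            (N - 1 < 0 \<and> ok_T4inv (Z 2 N) \<and> Z 2 (N-1) = act_T4inv (Qh^2) (Z 2 N))"
    using vert(2)[OF hZ[of 2 "N-1"] hZ[of 2 "N-1+1"]] by simp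

  define P where "P = Qh powi k"
  define R where "R = Qh powi N"
  have nzP: "P \<noteq> 0" "R \<noteq> 0" using nz by (simp_all add: P_def R_def power_int_not_zero)
  have ea: "Qh powi (k+2) = P * Qh^2" using nz by (simp add: P_def power_int_add)
  have eg: "Qh powi (2*N) = R^2" unfolding R_def
    by (metis power_int_mult power_int_power' mult.commute power_int_numeral)
  have eg': "Qh powi (2*(N-1)) = R^2 / Qh^2" using nz pw2'[of Qh N] eg by simp
  have c1: "Qh powi (k-4*N+2) = P * inverse (R^4) * Qh^2"
  proof -
    have "Qh powi (k-4*N+2) = P powi (1) * R powi (-4) * Qh powi (2)"
      unfolding P_def R_def by (rule pwc[OF nz(1)]) simp
    then show ?thesis by (simp add: power_int_minus)
  qed
  have c2: "(Qh^2) powi (-k+4*N-2) = inverse (P^2) * R^8 * inverse (Qh^4)"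
  proof -
    have "(Qh^2) powi (-k+4*N-2) = P powi (-2) * R powi (8) * Qh powi (-4)"
      unfolding P_def R_def by (rule pwc2[OF nz(1)]) simp
    then show ?thesis by (simp add: power_int_minus)
  qed
  have c3: "Qh powi (k+4*N+2) = P * R^4 * Qh^2"
  proof -
    have "Qh powi (k+4*N+2) = P powi (1) * R powi (4) * Qh powi (2)"
      unfolding P_def R_def by (rule pwc[OF nz(1)]) simp
    then show ?thesis by (simp add: power_int_minus)
  qed
  have c4: "(Qh^2) powi (-k-4*N-2) = inverse (P^2) * inverse (R^8) * inverse (Qh^4)"
  proof -
    have "(Qh^2) powi (-k-4*N-2) = P powi (-2) * R powi (-8) * Qh powi (-4)"
      unfolding P_def R_def by (rule pwc2[OF nz(1)]) simp
    then show ?thesis by (simp add: power_int_minus)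
  qed
  have c5: "Qh powi (-(3*k-4*N+4)) = inverse (P^3) * R^4 * inverse (Qh^4)"
  proof -
    have "Qh powi (-(3*k-4*N+4)) = P powi (-3) * R powi (4) * Qh powi (-4)"
      unfolding P_def R_def by (rule pwc[OF nz(1)]) simp
    then show ?thesis by (simp add: power_int_minus)
  qed
  have c6: "(Qh^2) powi (-3*k+4*N-4) = inverse (P^6) * R^8 * inverse (Qh^8)"
  proof -
    have "(Qh^2) powi (-3*k+4*N-4) = P powi (-6) * R powi (8) * Qh powi (-8)"
      unfolding P_def R_def by (rule pwc2[OF nz(1)]) simp
    then show ?thesis by (simp add: power_int_minus)
  qed
  have c7: "Qh powi (-(3*k+4*N+8)) = inverse (P^3) * inverse (R^4) * inverse (Qh^8)"
  proof -
    have "Qh powi (-(3*k+4*N+8)) = P powi (-3) * R powi (-4) * Qh powi (-8)"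
      unfolding P_def R_def by (rule pwc[OF nz(1)]) simp
    then show ?thesis by (simp add: power_int_minus)
  qed
  have c8: "(Qh^2) powi (-3*k-4*N-8) = inverse (P^6) * inverse (R^8) * inverse (Qh^16)"
  proof -
    have "(Qh^2) powi (-3*k-4*N-8) = P powi (-6) * R powi (-8) * Qh powi (-16)"
      unfolding P_def R_def by (rule pwc2[OF nz(1)]) simp
    then show ?thesis by (simp add: power_int_minus)
  qed
  have nzg': "\<gamma> * Qh powi (2*(N-1)) \<noteq> 0" by (rule nzg)
  note p0N = Rel_parts[OF RZ[of 0 N] nz(1) nza nzg]
  note p1N = Rel_parts[OF RZ[of 1 N] nz(1) nza nzg]
  note p1m = Rel_parts[OF RZ[of 1 "N-1"] nz(1) nza nzg]
  have t1: "the (tauKN (Qh^2) k N x0) = T (Z 2 N) 0"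
    using ht[of 0 N] p0N(10) p1N(9) by simp
  have t2: "the (tauKN (Qh^2) (k+1) N x0) = T (Z 2 N) 2"
    using ht[of 1 N] p1N(10) by simp
  have t3: "the (tauKN (Qh^2) (k+2) N x0) = T (Z 2 N) 1"
    using ht[of 2 N] by simp
  have t4: "the (tauKN (Qh^2) (k+3) N x0) = T (Z 3 N) 1"
    using ht[of 3 N] by simp
  have t5: "the (tauKN (Qh^2) k (N+1) x0) = TB (Z 2 N) 0"
    using ht[of 0 "N+1"] V[of 0 N 1] p0N(12) p1N(11) by simp
  have t6: "the (tauKN (Qh^2) (k+1) (N+1) x0) = TB (Z 2 N) 2"
    using ht[of 1 "N+1"] V[of 1 N 1] p1N(12) by simp
  have t7: "the (tauKN (Qh^2) (k+2) (N+1) x0) = TB (Z 2 N) 1"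
    using ht[of 2 "N+1"] V[of 2 N 1] by simp
  have t8: "the (tauKN (Qh^2) (k+3) (N+1) x0) = TB (Z 3 N) 1"
    using ht[of 3 "N+1"] V[of 3 N 1] by simp
  have t9: "the (tauKN (Qh^2) (k+1) (N-1) x0) = T (Z 2 (N-1)) 2"
    using ht[of 1 "N-1"] p1m(10) by simp
  have t10: "the (tauKN (Qh^2) (k+2) (N-1) x0) = T (Z 2 (N-1)) 1"
    using ht[of 2 "N-1"] by simp
  have R2N: "Rel Qh (\<alpha>0 * (P * Qh^2)) (\<gamma> * R^2) (Z 2 N) (Z 3 N)"
    using RZ[of 2 N] ea eg by simp
  have R2m: "Rel Qh (\<alpha>0 * (P * Qh^2)) (\<gamma> * (R^2 / Qh^2)) (Z 2 (N-1)) (Z 3 (N-1))"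
    using RZ[of 2 "N-1"] ea eg' by simp
  have nza': "\<alpha>0 * (P * Qh^2) \<noteq> 0" "\<gamma> * R^2 \<noteq> 0" "\<gamma> * (R^2 / Qh^2) \<noteq> 0"
    using nz nzP by auto
  note row = eqs_row[OF R2N nz(1) nza'(1,2)]
  have K5: "inverse (P^3) * R^4 * inverse (Qh^4) * \<gamma>^2 * inverse (\<alpha>0^3) = (\<gamma> * R^2)^2 * Qh^2 / (\<alpha>0 * (P * Qh^2))^3"
    using nz nzP by (simp add: field_simps)
  have K6: "inverse (P^6) * R^8 * inverse (Qh^8) * \<gamma>^4 * inverse (\<alpha>0^6) = Qh^4 * (\<gamma> * R^2)^4 / (\<alpha>0 * (P * Qh^2))^6"
    using nz nzP by (simp add: field_simps)
  have K7: "inverse (P^3) * inverse (R^4) * inverse (Qh^8) * inverse (\<gamma>^2) * inverse (\<alpha>0^3) = 1 / (Qh^2 * (\<gamma> * R^2)^2 * (\<alpha>0 * (P * Qh^2))^3)"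
    using nz nzP by (simp add: field_simps)
  have K8: "inverse (P^6) * inverse (R^8) * inverse (Qh^16) * inverse (\<gamma>^4) * inverse (\<alpha>0^6) = 1 / (Qh^4 * (\<gamma> * R^2)^4 * (\<alpha>0 * (P * Qh^2))^6)"
    using nz nzP by (simp add: field_simps)
  have E3: "Qh powi (-(3*k-4*N+4)) * \<gamma> ^ 2 * \<alpha>0 powi (-3) * the (tauKN (Qh^2) (k+3) N x0) * the (tauKN (Qh^2) k (N+1) x0)
              - (Qh^2) powi (-3*k+4*N-4) * \<gamma> ^ 4 * \<alpha>0 powi (-6) * the (tauKN (Qh^2) (k+1) N x0) * the (tauKN (Qh^2) (k+2) (N+1) x0)
              - the (tauKN (Qh^2) (k+1) (N+1) x0) * the (tauKN (Qh^2) (k+2) N x0) = 0"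
    unfolding t1 t2 t3 t4 t5 t6 t7 t8 c5 c6 unfolding power_int_minus power_int_numeral K5 K6 by (rule row(1))
  have E4: "Qh powi (-(3*k+4*N+8)) * \<gamma> powi (-2) * \<alpha>0 powi (-3) * the (tauKN (Qh^2) (k+3) (N+1) x0) * the (tauKN (Qh^2) k N x0)
              - (Qh^2) powi (-3*k-4*N-8) * \<gamma> powi (-4) * \<alpha>0 powi (-6) * the (tauKN (Qh^2) (k+2) N x0) * the (tauKN (Qh^2) (k+1) (N+1) x0)
              - the (tauKN (Qh^2) (k+2) (N+1) x0) * the (tauKN (Qh^2) (k+1) N x0) = 0"
    unfolding t1 t2 t3 t4 t5 t6 t7 t8 c7 c8 unfolding power_int_minus power_int_numeral K7 K8 by (rule row(2))
  have E12: "the (tauKN (Qh^2) (k+1) (N+1) x0) * the (tauKN (Qh^2) (k+2) (N-1) x0)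
              - Qh powi (k-4*N+2) * \<gamma> powi (-2) * \<alpha>0 * the (tauKN (Qh^2) (k+3) N x0) * the (tauKN (Qh^2) k N x0)
              - (Qh^2) powi (-k+4*N-2) * \<gamma> ^ 4 * \<alpha>0 powi (-2) * the (tauKN (Qh^2) (k+1) N x0) * the (tauKN (Qh^2) (k+2) N x0) = 0
          \<and> the (tauKN (Qh^2) (k+2) (N+1) x0) * the (tauKN (Qh^2) (k+1) (N-1) x0)
              - Qh powi (k+4*N+2) * \<gamma> ^ 2 * \<alpha>0 * the (tauKN (Qh^2) (k+3) N x0) * the (tauKN (Qh^2) k N x0)
              - (Qh^2) powi (-k-4*N-2) * \<gamma> powi (-4) * \<alpha>0 powi (-2) * the (tauKN (Qh^2) (k+2) N x0) * the (tauKN (Qh^2) (k+1) N x0) = 0"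
    using V2
  proof
    assume up: "0 \<le> N - 1 \<and> ok_T4 (Qh^2) (Z 2 (N-1)) \<and> Z 2 N = act_T4 (Qh^2) (Z 2 (N-1))"
    have vv: "TB (Z 2 (N-1)) i = T (Z 2 N) i" for i using V[of 2 "N-1" i] by simp
    have vv3: "TB (Z 3 (N-1)) 1 = T (Z 3 N) 1" using V[of 3 "N-1" 1] by simp
    note lu = eqs_up[OF R2m nz(1) nza'(1,3) conjunct1[OF conjunct2[OF up]], unfolded conjunct2[OF conjunct2[OF up], symmetric] vv vv3]
    have K1: "P * inverse (R^4) * Qh^2 * inverse (\<gamma>^2) * \<alpha>0 = \<alpha>0 * (P * Qh^2) / (Qh^4 * (\<gamma> * (R^2 / Qh^2))^2)"
      using nz nzP by (simp add: field_simps)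
    have K2: "inverse (P^2) * R^8 * inverse (Qh^4) * \<gamma>^4 * inverse (\<alpha>0^2) = Qh^8 * (\<gamma> * (R^2 / Qh^2))^4 / (\<alpha>0 * (P * Qh^2))^2"
      using nz nzP by (simp add: field_simps)
    have K3: "P * R^4 * Qh^2 * \<gamma>^2 * \<alpha>0 = Qh^4 * (\<gamma> * (R^2 / Qh^2))^2 * (\<alpha>0 * (P * Qh^2))"
      using nz nzP by (simp add: field_simps)
    have K4: "inverse (P^2) * inverse (R^8) * inverse (Qh^4) * inverse (\<gamma>^4) * inverse (\<alpha>0^2) = 1 / (Qh^8 * (\<gamma> * (R^2 / Qh^2))^4 * (\<alpha>0 * (P * Qh^2))^2)"
      using nz nzP by (simp add: field_simps)
    show ?thesis
      unfolding t1 t2 t3 t4 t5 t6 t7 t8 t9 t10 c1 c2 c3 c4 unfolding power_int_minus power_int_numeral K1 K2 K3 K4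
      using lu by blast
  next
    assume dn: "N - 1 < 0 \<and> ok_T4inv (Z 2 N) \<and> Z 2 (N-1) = act_T4inv (Qh^2) (Z 2 N)"
    note ld = eqs_down[OF R2N nz(1) nza'(1,2) conjunct1[OF conjunct2[OF dn]], unfolded conjunct2[OF conjunct2[OF dn], symmetric]]
    have K1: "P * inverse (R^4) * Qh^2 * inverse (\<gamma>^2) * \<alpha>0 = \<alpha>0 * (P * Qh^2) / (\<gamma> * R^2)^2"
      using nz nzP by (simp add: field_simps)
    have K2: "inverse (P^2) * R^8 * inverse (Qh^4) * \<gamma>^4 * inverse (\<alpha>0^2) = (\<gamma> * R^2)^4 / (\<alpha>0 * (P * Qh^2))^2"
      using nz nzP by (simp add: field_simps)
    have K3: "P * R^4 * Qh^2 * \<gamma>^2 * \<alpha>0 = (\<gamma> * R^2)^2 * (\<alpha>0 * (P * Qh^2))"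
      using nz nzP by (simp add: field_simps)
    have K4: "inverse (P^2) * inverse (R^8) * inverse (Qh^4) * inverse (\<gamma>^4) * inverse (\<alpha>0^2) = 1 / ((\<gamma> * R^2)^4 * (\<alpha>0 * (P * Qh^2))^2)"
      using nz nzP by (simp add: field_simps)
    show ?thesis
      unfolding t1 t2 t3 t4 t5 t6 t7 t8 t9 t10 c1 c2 c3 c4 unfolding power_int_minus power_int_numeral K1 K2 K3 K4
      using ld by blast
  qed
  show ?thesis unfolding Let_def x0_def[symmetric] using E12 E3 E4 by blast
qed
end
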